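(* Let $\Sigma$ be a graded alphabet and $t\in T_\Sigma$. Then the sequential subtree automaton $\mathrm{seq}(A_t)$ is isomorphic to the quotient $(A_t)_{\sim_\mathrm{h}}$ of the subtree automaton $A_t$ by the relation $\sim_\mathrm{h}$.
   Context: A graded alphabet is a finite set $\Sigma=\bigcup_{k\in\mathbb{N}}\Sigma_k$; $T_\Sigma$ is the set of trees $f(t_1,\ldots,t_k)$ with $f\in\Sigma_k$. Weights are in $(\mathbb{N},+)$. A RWTA is $A=(\Sigma,Q,\nu,\delta)$ with $Q$ finite, $\nu:Q\to\mathbb{N}$, $\delta\subseteq\bigcup_k Q\times\Sigma_k\times Q^k$; $\delta(f,q_1,\ldots,q_k)=\{q\mid(q,f,q_1,\ldots,q_k)\in\delta\}$. A morphism from $A_1=(\Sigma,Q_1,\nu_1,\delta_1)$ to $A_2=(\Gamma,Q_2,\nu_2,\delta_2)$ is a map $\mu$ sending states of $A_1$ to states of $A_2$ and symbols of $\Sigma_k$ to symbols of $\Gamma_k$, such that $(\mu(q),\mu(f),\mu(q_1),\ldots,\mu(q_k))\in\delta_2$ whenever $(q,f,q_1,\ldots,q_k)\in\delta_1$, and $\nu_2(\mu(q))=\nu_1(q)$ for all $q\in Q_1$; it is an isomorphism if it has an inverse $\mu^{-1}$ which is a morphism from $A_2$ to $A_1$. For $t=f(t_1,\ldots,t_k)$, $\mathrm{SubTree}(t)=\{t\}\cup\bigcup_j\mathrm{SubTree}(t_j)$ and $\mathrm{SubTreeSeries}_t=t+\sum_j\mathrm{SubTreeSeries}_{t_j}$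 ($\mathrm{SubTreeSeries}_t(s)$ is the number of nodes of $t$ whose subtree equals $s$). The tree $t^\sharp$ is obtained from $t$ by indexing each symbol occurrence with its position in a preorder traversal (indexed symbols are distinct and keep their arity); $\Sigma_{t^\sharp}$ is the set of indexed symbols; $\mathrm{h}$ erases indices. The subtree automaton $A_t=(\Sigma,Q,\nu,\delta)$ has $Q=\mathrm{SubTree}(t^\sharp)$, $\nu\equiv1$, and for $f\in\Sigma_{t^\sharp}$ of arity $k$: $t_{k+1}\in\delta(\mathrm{h}(f),t_1,\ldots,t_k)$ iff $t_{k+1}=f(t_1,\ldots,t_k)$. The relation $\sim_\mathrm{h}$ on $Q$ is $r_1\sim_\mathrm{h}r_2\iff\mathrm{h}(r_1)=\mathrm{h}(r_2)$. The quotient of a RWTA $(\Sigma,Q,\nu,\delta)$ by an equivalence $\sim$ on $Q$ is $(\Sigma,Q_\sim,\nu',\delta')$ with $Q_\sim$ the set of classes, $\nu'(C)=\sum_{q\in C}\nu(q)$, and $C_{k+1}\in\delta'(f,C_1,\ldots,C_k)$ iff there are $q_i\in C_i$ with $q_{k+1}\in\delta(f,q_1,\ldots,q_k)$. The sequential subtree automaton is $\mathrm{seq}(A_t)=(\Sigma,\mathrm{SubTree}(t),\nu'',\delta'')$ with $\nu''(t')=\mathrm{SubTreeSeries}_t(t')$ and, for $f\in\Sigma_k$, $t_{k+1}\in\delta''(f,t_1,\ldots,t_k)$ iff $t_{k+1}=f(t_1,\ldots,t_k)$. *)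

theory Defs
  imports Main
begin

text \<open>Ranked trees. A graded alphabet is a finite set of pairs (symbol, arity):
  f is in Sigma_k iff (f,k) is in the alphabet.\<close>

datatype 'f tree = Node 'f "'f tree list"

fun wf_tree :: "('f \<times> nat) set \<Rightarrow> 'f tree \<Rightarrow> bool" where
  "wf_tree Sig (Node f ts) = ((f, length ts) \<in> Sig \<and> (\<forall>u\<in>set ts. wf_tree Sig u))"

fun subtrees :: "'f tree \<Rightarrow> 'f tree set" where
  "subtrees (Node f ts) = insert (Node f ts) (\<Union>u\<in>set ts. subtrees u)"

fun subtree_series :: "'f tree \<Rightarrow> 'f tree \<Rightarrow> nat" where
  "subtree_series (Node f ts) s =
     (if Node f ts = s then 1 else 0) + sum_list (map (\<lambda>u. subtree_series u s) ts)"

fun nodes :: "'f tree \<Rightarrow> nat" where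
  "nodes (Node f ts) = Suc (sum_list (map nodes ts))"

fun index_tree :: "nat \<Rightarrow> 'f tree \<Rightarrow> ('f \<times> nat) tree"
and index_list :: "nat \<Rightarrow> 'f tree list \<Rightarrow> ('f \<times> nat) tree list" where
  "index_tree n (Node f ts) = Node (f, n) (index_list (Suc n) ts)"
| "index_list n [] = []"
| "index_list n (u # us) = index_tree n u # index_list (n + nodes u) us"

definition sharp :: "'f tree \<Rightarrow> ('f \<times> nat) tree" where
  "sharp t = index_tree 0 t"

fun symbols :: "'f tree \<Rightarrow> ('f \<times> nat) set" where
  "symbols (Node f ts) = insert (f, length ts) (\<Union>u\<in>set ts. symbols u)"

definition h :: "('f \<times> nat) tree \<Rightarrow> 'f tree" where
  "h r = map_tree fst r"

record ('s, 'q) rwta =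
  alph :: "('s \<times> nat) set"
  states :: "'q set"
  weight :: "'q \<Rightarrow> nat"
  trans :: "('q \<times> 's \<times> 'q list) set"

definition morphism ::
  "('s, 'q) rwta \<Rightarrow> ('g, 'p) rwta \<Rightarrow> ('q \<Rightarrow> 'p) \<Rightarrow> ('s \<Rightarrow> 'g) \<Rightarrow> bool" where
  "morphism A1 A2 muQ muS \<longleftrightarrow>
     (\<forall>q\<in>states A1. muQ q \<in> states A2) \<and>
     (\<forall>(f, k)\<in>alph A1. (muS f, k) \<in> alph A2) \<and>
     (\<forall>(q, f, qs)\<in>trans A1. (muQ q, muS f, map muQ qs) \<in> trans A2) \<and>
     (\<forall>q\<in>states A1. weight A2 (muQ q) = weight A1 q)"

definition isomorphism ::
  "('s, 'q) rwta \<Rightarrow> ('g, 'p) rwta \<Rightarrow> ('q \<Rightarrow> 'p) \<Rightarrow> ('s \<Rightarrow> 'g) \<Rightarrow> bool" where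
  "isomorphism A1 A2 muQ muS \<longleftrightarrow>
     morphism A1 A2 muQ muS \<and>
     (\<exists>nuQ nuS. morphism A2 A1 nuQ nuS \<and>
        (\<forall>q\<in>states A1. nuQ (muQ q) = q) \<and> (\<forall>p\<in>states A2. muQ (nuQ p) = p) \<and>
        (\<forall>f\<in>fst ` alph A1. nuS (muS f) = f) \<and> (\<forall>g\<in>fst ` alph A2. muS (nuS g) = g))"

definition isomorphic :: "('s, 'q) rwta \<Rightarrow> ('g, 'p) rwta \<Rightarrow> bool" where
  "isomorphic A1 A2 \<longleftrightarrow> (\<exists>muQ muS. isomorphism A1 A2 muQ muS)"

definition subtree_aut :: "('f \<times> nat) set \<Rightarrow> 'f tree \<Rightarrow> ('f, ('f \<times> nat) tree) rwta" where
  "subtree_aut Sig t =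
     \<lparr> alph = Sig,
       states = subtrees (sharp t),
       weight = (\<lambda>_. 1),
       trans = {(s, fst f, ts) | s f ts.
                  (f, length ts) \<in> symbols (sharp t) \<and>
                  s \<in> subtrees (sharp t) \<and> set ts \<subseteq> subtrees (sharp t) \<and>
                  s = Node f ts} \<rparr>"

definition sim_h :: "('f \<times> nat) tree set \<Rightarrow> (('f \<times> nat) tree \<times> ('f \<times> nat) tree) set" where
  "sim_h Q = {(r1, r2). r1 \<in> Q \<and> r2 \<in> Q \<and> h r1 = h r2}"

definition quotient_aut :: "('s, 'q) rwta \<Rightarrow> ('q \<times> 'q) set \<Rightarrow> ('s, 'q set) rwta" where
  "quotient_aut A R =
     \<lparr> alph = alph A,
       states = states A // R,
       weight = (\<lambda>C. \<Sum>q\<in>C. weight A q),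
       trans = {(C, f, Cs) | C f Cs.
                  C \<in> states A // R \<and> set Cs \<subseteq> states A // R \<and>
                  (\<exists>q qs. q \<in> C \<and> list_all2 (\<in>) qs Cs \<and> (q, f, qs) \<in> trans A)} \<rparr>"

definition seq_aut :: "('f \<times> nat) set \<Rightarrow> 'f tree \<Rightarrow> ('f, 'f tree) rwta" where
  "seq_aut Sig t =
     \<lparr> alph = Sig,
       states = subtrees t,
       weight = subtree_series t,
       trans = {(s, f, ts) | s f ts.
                  (f, length ts) \<in> Sig \<and>
                  s \<in> subtrees t \<and> set ts \<subseteq> subtrees t \<and>
                  s = Node f ts} \<rparr>"

end

theory Submission
  imports Defs "HOL-Library.Multiset"
begin

fun mst :: "'a tree \<Rightarrow> 'a tree multiset" where
  "mst (Node f ts) = add_mset (Node f ts) (sum_list (map mst ts))"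

fun root :: "'a tree \<Rightarrow> 'a" where "root (Node a ts) = a"

lemma count_sum_list_gen: "count (sum_list (map g xs)) s = sum_list (map (\<lambda>x. count (g x) s) xs)"
  by (induction xs) auto

lemma image_sum_list_gen: "image_mset f (sum_list (map g xs)) = sum_list (map (\<lambda>x. image_mset f (g x)) xs)"
  by (induction xs) auto

lemma count_mst: "count (mst R) s = subtree_series R s"
  by (induction R) (auto simp: count_sum_list_gen intro!: arg_cong[where f=sum_list])

lemma set_mst: "set_mset (mst R) = subtrees R"
  by (induction R) (auto simp: set_mset_sum_list)

lemma mst_map: "mst (map_tree g R) = image_mset (map_tree g) (mst R)"
  by (induction R) (auto simp: image_sum_list_gen o_def intro!: arg_cong[where f=sum_list])

lemma subtrees_map: "subtrees (map_tree g R) = map_tree g ` subtrees R"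
  by (induction R) auto

lemma finite_subtrees: "finite (subtrees R)"
  by (induction R) auto

lemma root_in: "root r \<in> set_tree r"
  by (cases r) auto

lemma subtree_set: "r \<in> subtrees R \<Longrightarrow> set_tree r \<subseteq> set_tree R"
  by (induction R) auto

lemma h_index:
  fixes t :: "'a tree" and ts :: "'a tree list"
  shows
  "map_tree fst (index_tree n t) = t"
  "map (map_tree fst) (index_list n ts) = ts"
  by (induction n t and n ts rule: index_tree_index_list.induct) auto

lemma index_props:
  fixes t :: "'a tree" and ts :: "'a tree list"
  shows
  "(\<forall>x. count (mst (index_tree n t)) x \<le> 1) \<and>
   (\<forall>x\<in>set_tree (index_tree n t). n \<le> snd x \<and> snd x < n + nodes t)"
  "(\<forall>x. count (sum_list (map mst (index_list n ts))) x \<le> 1) \<and>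
   (\<forall>x\<in>(\<Union>u\<in>set (index_list n ts). set_tree u). n \<le> snd x \<and> snd x < n + sum_list (map nodes ts))"
proof (induction n t and n ts rule: index_tree_index_list.induct)
  case (1 n f ts)
  have nin: "Node (f, n) (index_list (Suc n) ts) \<notin># sum_list (map mst (index_list (Suc n) ts))"
  proof
    assume "Node (f, n) (index_list (Suc n) ts) \<in># sum_list (map mst (index_list (Suc n) ts))"
    then obtain u where u: "u \<in> set (index_list (Suc n) ts)"
      and "Node (f, n) (index_list (Suc n) ts) \<in> subtrees u"
      by (auto simp: set_mset_sum_list set_mst)
    then have "(f, n) \<in> set_tree u" using subtree_set by fastforce
    then show False using 1 u by fastforce
  qed
  show ?case
  proof
    show "\<forall>x. count (mst (index_tree n (Node f ts))) x \<le> 1"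
    proof
      fix x
      show "count (mst (index_tree n (Node f ts))) x \<le> 1"
      proof (cases "x = Node (f, n) (index_list (Suc n) ts)")
        case True
        have c0: "count (sum_list (map mst (index_list (Suc n) ts))) x = 0"
          using nin True by (simp only: not_in_iff)
        show ?thesis using c0 True by simp
      next
        case False
        then show ?thesis using 1 by simp
      qed
    qed
    show "\<forall>x\<in>set_tree (index_tree n (Node f ts)). n \<le> snd x \<and> snd x < n + nodes (Node f ts)"
      using 1 by fastforce
  qed
next
  case (2 n)
  then show ?case by simp
next
  case (3 n u us)
  have disj: "\<not> (x \<in># mst (index_tree n u) \<and> x \<in># sum_list (map mst (index_list (n + nodes u) us)))" for x
  proof
    assume a: "x \<in># mst (index_tree n u) \<and> x \<in># sum_list (map mst (index_list (n + nodes u) us))"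
    then have "root x \<in> set_tree (index_tree n u)"
      using root_in subtree_set set_mst by fastforce
    moreover from a obtain v where "v \<in> set (index_list (n + nodes u) us)" "x \<in> subtrees v"
      by (auto simp: set_mset_sum_list set_mst)
    then have "root x \<in> (\<Union>v\<in>set (index_list (n + nodes u) us). set_tree v)"
      using root_in subtree_set by fastforce
    ultimately show False using 3 by fastforce
  qed
  show ?case
  proof
    show "\<forall>x. count (sum_list (map mst (index_list n (u # us)))) x \<le> 1"
    proof
      fix x
      have a1: "count (mst (index_tree n u)) x \<le> 1" using 3 by blast
      have a2: "count (sum_list (map mst (index_list (n + nodes u) us))) x \<le> 1" using 3 by blast
      have "count (mst (index_tree n u)) x = 0 \<or> count (sum_list (map mst (index_list (n + nodes u) us))) x = 0"
        using disj[of x] by (simp only: not_in_iff[symmetric]) blast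
      then have "count (mst (index_tree n u)) x + count (sum_list (map mst (index_list (n + nodes u) us))) x \<le> 1"
        using a1 a2 by linarith
      then show "count (sum_list (map mst (index_list n (u # us)))) x \<le> 1"
        by (simp only: index_list.simps list.map sum_list.Cons count_union)
    qed
    show "\<forall>x\<in>\<Union> (set_tree ` set (index_list n (u # us))). n \<le> snd x \<and> snd x < n + sum_list (map nodes (u # us))"
      using 3 by fastforce
  qed
qed

lemma symbols_sub: "Node g rs \<in> subtrees R \<Longrightarrow> (g, length rs) \<in> symbols R"
  by (induction R) auto

lemma wf_sub: "wf_tree Sig t \<Longrightarrow> s \<in> subtrees t \<Longrightarrow> wf_tree Sig s"
  by (induction t) auto

lemma sub_children: "Node g rs \<in> subtrees R \<Longrightarrow> x \<in> set rs \<Longrightarrow> x \<in> subtrees R"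
proof (induction R)
  case (Node a ts)
  then show ?case by (cases x) fastforce
qed

lemma h_eq: "h = map_tree fst"
  by (rule ext) (simp add: h_def)

lemma hQ: "h ` subtrees (sharp t) = subtrees t"
  unfolding h_def sharp_def by (metis subtrees_map h_index(1))

lemma card_cls: "card {r \<in> subtrees (sharp t). h r = s} = subtree_series t s"
proof -
  let ?M = "mst (sharp t)"
  have "subtree_series t s = count (mst (h (sharp t))) s"
    by (simp add: count_mst h_def sharp_def h_index)
  also have "\<dots> = count (image_mset h ?M) s"
  proof -
    have hh: "h = map_tree fst" by (rule ext) (simp add: h_def)
    show ?thesis unfolding hh by (simp only: mst_map)
  qed
  also have "\<dots> = (\<Sum>y\<in>h -` {s} \<inter> set_mset ?M. count ?M y)" by (rule count_image_mset)
  also have "\<dots> = (\<Sum>y\<in>h -` {s} \<inter> set_mset ?M. 1)"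
  proof (rule sum.cong)
    fix y assume "y \<in> h -` {s} \<inter> set_mset ?M"
    then have c1: "count ?M y > 0" by auto
    moreover have "count ?M y \<le> 1" using index_props(1)[of 0 t] by (simp add: sharp_def)
    with c1 show "count ?M y = 1" by linarith
  qed simp
  also have "\<dots> = card (h -` {s} \<inter> set_mset ?M)" by simp
  also have "h -` {s} \<inter> set_mset ?M = {r \<in> subtrees (sharp t). h r = s}"
    by (auto simp: set_mst)
  finally show ?thesis by simp
qed

lemma quot_eq: "Q // sim_h Q = (\<lambda>s. {r \<in> Q. h r = s}) ` (h ` Q)"
proof -
  have e: "sim_h Q `` {x} = {r \<in> Q. h r = h x}" if "x \<in> Q" for x
    using that by (auto simp: sim_h_def)
  have "Q // sim_h Q = (\<Union>x\<in>Q. {{r \<in> Q. h r = h x}})"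
    unfolding quotient_def using e by (intro SUP_cong) auto
  also have "\<dots> = (\<lambda>s. {r \<in> Q. h r = s}) ` (h ` Q)" by auto
  finally show ?thesis .
qed

theorem proposition7:
  fixes Sig :: "('f \<times> nat) set" and t :: "'f tree"
  assumes "finite Sig" and "wf_tree Sig t"
  shows "isomorphic (seq_aut Sig t)
           (quotient_aut (subtree_aut Sig t) (sim_h (states (subtree_aut Sig t))))"
proof -
  define Q where "Q = subtrees (sharp t)"
  define cls where "cls s = {r \<in> Q. h r = s}" for s
  define nuQ where "nuQ C = h (SOME r. r \<in> C)" for C :: "('f \<times> nat) tree set"
  let ?A = "seq_aut Sig t"
  let ?B = "quotient_aut (subtree_aut Sig t) (sim_h (states (subtree_aut Sig t)))"
  have stB: "states ?B = cls ` subtrees t"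
    by (simp add: quotient_aut_def subtree_aut_def quot_eq cls_def Q_def hQ)
  have stA: "states ?A = subtrees t" by (simp add: seq_aut_def)
  have wB: "weight ?B C = card C" for C by (simp add: quotient_aut_def subtree_aut_def)
  have wA: "weight ?A s = subtree_series t s" for s by (simp add: seq_aut_def)
  have ccard: "card (cls s) = subtree_series t s" for s
    unfolding cls_def Q_def by (rule card_cls)
  have clsne: "s \<in> subtrees t \<Longrightarrow> \<exists>r\<in>Q. h r = s" for s
    using hQ[of t] unfolding Q_def by force
  have nu_cls: "nuQ (cls s) = s" if "s \<in> subtrees t" for s
  proof -
    have "\<exists>r. r \<in> cls s" using clsne[OF that] unfolding cls_def by auto
    then have "(SOME r. r \<in> cls s) \<in> cls s" by (rule someI_ex)
    then show ?thesis unfolding nuQ_def cls_def by simp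
  qed
  have nu_mem: "nuQ C = h r" if "C \<in> states ?B" "r \<in> C" for C r
    using that nu_cls unfolding stB cls_def by auto
  have transA: "trans ?A = {(s, f, ts) | s f ts. (f, length ts) \<in> Sig \<and>
                  s \<in> subtrees t \<and> set ts \<subseteq> subtrees t \<and> s = Node f ts}"
    by (simp add: seq_aut_def)
  have transB: "trans ?B = {(C, f, Cs) | C f Cs.
                  C \<in> states ?B \<and> set Cs \<subseteq> states ?B \<and>
                  (\<exists>q qs. q \<in> C \<and> list_all2 (\<in>) qs Cs \<and> (q, f, qs) \<in> trans (subtree_aut Sig t))}"
    by (simp add: quotient_aut_def)
  have transS: "trans (subtree_aut Sig t) = {(s, fst f, ts) | s f ts.
                  (f, length ts) \<in> symbols (sharp t) \<and>
                  s \<in> Q \<and> set ts \<subseteq> Q \<and> s = Node f ts}"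
    by (simp add: subtree_aut_def Q_def)
  have alA: "alph ?A = Sig" by (simp add: seq_aut_def)
  have alB: "alph ?B = Sig" by (simp add: quotient_aut_def subtree_aut_def)
  have m1: "morphism ?A ?B cls id"
    unfolding morphism_def
  proof (intro conjI)
    show "\<forall>q\<in>states ?A. cls q \<in> states ?B" using stA stB by auto
    show "\<forall>(f, k)\<in>alph ?A. (id f, k) \<in> alph ?B" using alA alB by auto
    show "\<forall>q\<in>states ?A. weight ?B (cls q) = weight ?A q" using wA wB ccard by auto
    show "\<forall>(q, f, qs)\<in>trans ?A. (cls q, id f, map cls qs) \<in> trans ?B"
    proof (clarsimp simp: transA)
      fix f ts
      assume a: "(f, length ts) \<in> Sig" "Node f ts \<in> subtrees t" "set ts \<subseteq> subtrees t"
      obtain r where r: "r \<in> Q" "h r = Node f ts" using clsne[OF a(2)] by auto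
      obtain g rs where rr: "r = Node g rs" by (cases r)
      have g: "fst g = f" "map h rs = ts" using r(2) unfolding rr h_eq by simp_all
      have rsQ: "set rs \<subseteq> Q" using sub_children[of g rs "sharp t"] r(1) unfolding rr Q_def by blast
      have la: "list_all2 (\<in>) rs (map cls ts)"
        using rsQ g(2) unfolding cls_def
        by (auto simp: list_all2_conv_all_nth nth_mem subsetD)
      have sy: "(g, length rs) \<in> symbols (sharp t)"
        using symbols_sub[of g rs "sharp t"] r(1) rr unfolding Q_def by blast
      have tS: "(r, fst g, rs) \<in> trans (subtree_aut Sig t)"
        unfolding transS using r(1) rr rsQ sy by blast
      have c1: "cls (Node f ts) \<in> states ?B" using a(2) stB by blast
      have c2: "set (map cls ts) \<subseteq> states ?B" using a(3) stB by auto
      have c3: "r \<in> cls (Node f ts)" using r by (simp add: cls_def)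
      show "(cls (Node f ts), f, map cls ts) \<in> trans ?B"
        unfolding transB using c1 c2 c3 la tS g(1) by blast
    qed
  qed
  have m2: "morphism ?B ?A nuQ id"
    unfolding morphism_def
  proof (intro conjI)
    show "\<forall>q\<in>states ?B. nuQ q \<in> states ?A" using stA stB nu_cls by auto
    show "\<forall>(f, k)\<in>alph ?B. (id f, k) \<in> alph ?A" using alA alB by auto
    show "\<forall>q\<in>states ?B. weight ?A (nuQ q) = weight ?B q" using wA wB ccard stB nu_cls by auto
    show "\<forall>(q, f, qs)\<in>trans ?B. (nuQ q, id f, map nuQ qs) \<in> trans ?A"
    proof (clarsimp simp: transB)
      fix C f Cs q qs
      assume a: "C \<in> states ?B" "set Cs \<subseteq> states ?B" "q \<in> C" "list_all2 (\<in>) qs Cs"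
        "(q, f, qs) \<in> trans (subtree_aut Sig t)"
      obtain g where g: "fst g = f" "(g, length qs) \<in> symbols (sharp t)" "q \<in> Q" "set qs \<subseteq> Q"
        "q = Node g qs" using a(5) unfolding transS by auto
      have nq: "nuQ C = h q" using nu_mem a by blast
      have nqs: "map nuQ Cs = map h qs"
      proof (rule nth_equalityI)
        show "length (map nuQ Cs) = length (map h qs)" using a(4) by (simp add: list_all2_lengthD)
        fix i assume "i < length (map nuQ Cs)"
        then have i: "i < length Cs" by simp
        have "Cs ! i \<in> states ?B" using a(2) i nth_mem by blast
        moreover have "qs ! i \<in> Cs ! i" using a(4) i by (simp add: list_all2_conv_all_nth)
        ultimately have "nuQ (Cs ! i) = h (qs ! i)" by (rule nu_mem)
        then show "map nuQ Cs ! i = map h qs ! i" using i a(4) by (simp add: list_all2_lengthD)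
      qed
      have hq: "h q = Node f (map h qs)" using g(1) unfolding g(5) h_eq by simp
      have sub: "h q \<in> subtrees t" using g(3) hQ[of t] unfolding Q_def by auto
      have subs: "set (map h qs) \<subseteq> subtrees t" using g(4) hQ[of t] unfolding Q_def by auto
      have "wf_tree Sig (h q)" using wf_sub[OF assms(2) sub] .
      then have "(f, length qs) \<in> Sig" using hq by simp
      then show "(nuQ C, f, map nuQ Cs) \<in> trans ?A"
        unfolding transA nq nqs using hq sub subs by auto
    qed
  qed
  have i1: "\<forall>q\<in>states ?A. nuQ (cls q) = q" using stA nu_cls by auto
  have i2: "\<forall>p\<in>states ?B. cls (nuQ p) = p" using stB nu_cls by auto
  show ?thesis
    unfolding isomorphic_def isomorphism_def
    by (intro exI[of _ cls] exI[of _ id] conjI m1 exI[of _ nuQ] m2 i1 i2) auto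
qed

end
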